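(* Let $x\in\widetilde X$ and let $\theta\in I^{\mathbb{N}}$ be its itinerary, where $I=\{1,\dots,N\}$. Then \[ p(\theta,n+1)\leqslant p(\theta,n)+\sum_{k=2}^N(k-1)\,\#L_n^k(\theta)\qquad\forall\, n\geqslant 1. \] If moreover $f$ satisfies the separation property, then this inequality is an equality for all $n\geqslant 1$.
   Context: Let $(X,d)$ be a compact metric space, $X_1,\dots,X_N$ ($N\geqslant 2$) non-empty pairwise disjoint open subsets with $X=\bigcup_i\overline{X_i}$, $\Delta:=\{x\in\overline{X_i}\cap\overline{X_j}:i\neq j\}$, and $f:X\to X$ a map such that each $f|_{X_i}$ admits a continuous extension $f_i:\overline{X_i}\to X$. Separation property: each $f_i$ injective and $f_i(\overline{X_i})\cap f_j(\overline{X_j})=\emptyset$ for $i\neq j$. $\widetilde X:=\bigcap_{n\geqslant 0}f^{-n}(X\setminus\Delta)$; the itinerary of $x\in\widetilde X$ is $\theta$ with $\theta_t=i$ iff $f^t(x)\in X_i$. $L_n(\theta):=\{\theta_t\dots\theta_{t+n-1}:t\geqslant 0\}$, $p(\theta,n):=\#L_n(\theta)$. For $A\subset X$ let $F_i(A):=\overline{f(A\cap X_i)}$ and $A_{i_1\dots i_n}:=F_{i_n}\circ\dots\circ F_{i_1}(X)$. For $n\geqslant1$, $k\in I$, \[ L_n^k(\theta):=\{i_1\dots i_n\in L_n(\theta):\#\{j\in I:\exists t\geqslant0 \text{ with } f^{t+n}(x)\in A_{i_1\dots i_n}\cap X_j\}=k\}. \] *)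

theory Defs
  imports "HOL-Analysis.Analysis"
begin

definition Delta :: "nat \<Rightarrow> (nat \<Rightarrow> 'a::topological_space set) \<Rightarrow> 'a set" where
  "Delta N Xs = {x. \<exists>i\<in>{1..N}. \<exists>j\<in>{1..N}. i \<noteq> j \<and> x \<in> closure (Xs i) \<inter> closure (Xs j)}"

definition Xtilde :: "nat \<Rightarrow> (nat \<Rightarrow> 'a::topological_space set) \<Rightarrow> ('a \<Rightarrow> 'a) \<Rightarrow> 'a set" where
  "Xtilde N Xs f = (\<Inter>n. (f ^^ n) -` (UNIV - Delta N Xs))"

definition is_itinerary :: "nat \<Rightarrow> (nat \<Rightarrow> 'a set) \<Rightarrow> ('a \<Rightarrow> 'a) \<Rightarrow> 'a \<Rightarrow> (nat \<Rightarrow> nat) \<Rightarrow> bool" where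
  "is_itinerary N Xs f x \<theta> \<longleftrightarrow>
     (\<forall>t. \<forall>i\<in>{1..N}. \<theta> t = i \<longleftrightarrow> (f ^^ t) x \<in> Xs i) \<and> (\<forall>t. \<theta> t \<in> {1..N})"

definition Lang :: "nat \<Rightarrow> (nat \<Rightarrow> nat) \<Rightarrow> nat list set" where
  "Lang n \<theta> = {map \<theta> [t..<t+n] | t. True}"

definition complexity :: "(nat \<Rightarrow> nat) \<Rightarrow> nat \<Rightarrow> nat" where
  "complexity \<theta> n = card (Lang n \<theta>)"

definition Fop :: "(nat \<Rightarrow> 'a::topological_space set) \<Rightarrow> ('a \<Rightarrow> 'a) \<Rightarrow> nat \<Rightarrow> 'a set \<Rightarrow> 'a set" where
  "Fop Xs f i A = closure (f ` (A \<inter> Xs i))"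

definition Aword :: "(nat \<Rightarrow> 'a::topological_space set) \<Rightarrow> ('a \<Rightarrow> 'a) \<Rightarrow> nat list \<Rightarrow> 'a set" where
  "Aword Xs f w = foldl (\<lambda>A i. Fop Xs f i A) UNIV w"

definition Lang_k :: "nat \<Rightarrow> (nat \<Rightarrow> 'a::topological_space set) \<Rightarrow> ('a \<Rightarrow> 'a) \<Rightarrow> 'a \<Rightarrow> (nat \<Rightarrow> nat)
    \<Rightarrow> nat \<Rightarrow> nat \<Rightarrow> nat list set" where
  "Lang_k N Xs f x \<theta> n k = {w \<in> Lang n \<theta>.
      card {j \<in> {1..N}. \<exists>t. (f ^^ (t + n)) x \<in> Aword Xs f w \<inter> Xs j} = k}"

definition separation :: "nat \<Rightarrow> (nat \<Rightarrow> 'a::topological_space set) \<Rightarrow> (nat \<Rightarrow> 'a \<Rightarrow> 'a) \<Rightarrow> bool" where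
  "separation N Xs fe \<longleftrightarrow>
     (\<forall>i\<in>{1..N}. inj_on (fe i) (closure (Xs i))) \<and>
     (\<forall>i\<in>{1..N}. \<forall>j\<in>{1..N}. i \<noteq> j \<longrightarrow> fe i ` closure (Xs i) \<inter> fe j ` closure (Xs j) = {})"

end

theory Submission
  imports Defs
begin

lemma tl_last: "length u = Suc n \<Longrightarrow> u = take n u @ [last u]"
  by (induction u arbitrary: n rule: rev_induct) auto

lemma Aword_snoc: "Aword Xs f (w @ [i]) = Fop Xs f i (Aword Xs f w)"
  by (simp add: Aword_def)

lemma Aword_closed: "closed (Aword Xs f w)"
proof (induction w rule: rev_induct)
  case Nil then show ?case by (simp add: Aword_def)
next
  case (snoc i w) then show ?case by (simp add: Aword_snoc Fop_def)
qed

lemma itin_facts: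
  assumes "is_itinerary N Xs f x \<theta>"
  shows "\<theta> s \<in> {1..N}" "(f ^^ s) x \<in> Xs (\<theta> s)"
    "j \<in> {1..N} \<Longrightarrow> (f ^^ s) x \<in> Xs j \<Longrightarrow> \<theta> s = j"
  using assms unfolding is_itinerary_def by blast+

lemma forward:
  assumes "is_itinerary N Xs f x \<theta>"
  shows "(f ^^ (t + n)) x \<in> Aword Xs f (map \<theta> [t..<t+n])"
proof (induction n)
  case 0 then show ?case by (simp add: Aword_def)
next
  case (Suc n)
  have e: "map \<theta> [t..<t+Suc n] = map \<theta> [t..<t+n] @ [\<theta> (t+n)]" by simp
  have "(f ^^ (t + n)) x \<in> Aword Xs f (map \<theta> [t..<t+n]) \<inter> Xs (\<theta> (t+n))"
    using Suc itin_facts(2)[OF assms] by blast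
  then have "(f ^^ (t + Suc n)) x \<in> f ` (Aword Xs f (map \<theta> [t..<t+n]) \<inter> Xs (\<theta> (t+n)))"
    by simp
  then have "(f ^^ (t + Suc n)) x \<in> closure (f ` (Aword Xs f (map \<theta> [t..<t+n]) \<inter> Xs (\<theta> (t+n))))"
    by (rule subsetD[OF closure_subset])
  then show ?case by (simp only: e Aword_snoc Fop_def)
qed

lemma Fop_sub:
  fixes Xs :: "nat \<Rightarrow> 'a::metric_space set"
  assumes cpt: "compact (UNIV :: 'a set)"
    and cont: "continuous_on (closure (Xs i)) (fe i)" and ag: "\<forall>y\<in>Xs i. fe i y = f y"
    and A: "closed A"
  shows "Fop Xs f i A \<subseteq> fe i ` (A \<inter> closure (Xs i))"
proof -
  have "compact (UNIV \<inter> (A \<inter> closure (Xs i)))"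
    using cpt A by (intro compact_Int_closed) auto
  then have "compact (fe i ` (A \<inter> closure (Xs i)))"
    using cont by (intro compact_continuous_image) (auto intro: continuous_on_subset)
  then have cl: "closed (fe i ` (A \<inter> closure (Xs i)))" by (rule compact_imp_closed)
  have "f ` (A \<inter> Xs i) \<subseteq> fe i ` (A \<inter> closure (Xs i))"
  proof (rule subsetI)
    fix y assume "y \<in> f ` (A \<inter> Xs i)"
    then obtain z where z: "z \<in> A" "z \<in> Xs i" "y = f z" by blast
    then have "y = fe i z" using ag by simp
    moreover have "z \<in> A \<inter> closure (Xs i)" using z closure_subset by blast
    ultimately show "y \<in> fe i ` (A \<inter> closure (Xs i))" by (rule image_eqI)
  qed
  then show ?thesis unfolding Fop_def using cl by (rule closure_minimal)
qed

lemma backward: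
  fixes Xs :: "nat \<Rightarrow> 'a::metric_space set"
  assumes cpt: "compact (UNIV :: 'a set)"
    and ext: "\<forall>i\<in>{1..N}. continuous_on (closure (Xs i)) (fe i) \<and> (\<forall>y\<in>Xs i. fe i y = f y)"
    and itin: "is_itinerary N Xs f x \<theta>"
    and sep: "separation N Xs fe"
  shows "set w \<subseteq> {1..N} \<Longrightarrow> length w \<le> s \<Longrightarrow> (f ^^ s) x \<in> Aword Xs f w
     \<Longrightarrow> map \<theta> [s - length w..<s] = w"
proof (induction w arbitrary: s rule: rev_induct)
  case Nil then show ?case by simp
next
  case (snoc i w)
  obtain s' where s: "s = Suc s'" using snoc.prems(2) by (cases s) auto
  have i: "i \<in> {1..N}" using snoc.prems(1) by auto
  have z0: "(f ^^ s') x \<in> Xs (\<theta> s')" and th: "\<theta> s' \<in> {1..N}" using itin_facts[OF itin] by auto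
  have y: "(f ^^ s) x = fe (\<theta> s') ((f ^^ s') x)" using z0 th ext s by auto
  have "Fop Xs f i (Aword Xs f w) \<subseteq> fe i ` (Aword Xs f w \<inter> closure (Xs i))"
    by (rule Fop_sub[OF cpt]) (use ext i in \<open>auto simp: Aword_closed\<close>)
  then have "(f ^^ s) x \<in> fe i ` (Aword Xs f w \<inter> closure (Xs i))"
    using snoc.prems(3) by (auto simp: Aword_snoc)
  then obtain z where z: "z \<in> Aword Xs f w" "z \<in> closure (Xs i)" and yz: "(f ^^ s) x = fe i z" by blast
  have z0c: "(f ^^ s') x \<in> closure (Xs (\<theta> s'))" using z0 closure_subset by blast
  have "\<theta> s' = i"
  proof (rule ccontr)
    assume "\<theta> s' \<noteq> i"
    then have "fe (\<theta> s') ` closure (Xs (\<theta> s')) \<inter> fe i ` closure (Xs i) = {}"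
      using sep th i unfolding separation_def by blast
    then show False using y yz z(2) z0c by blast
  qed
  then have "z = (f ^^ s') x"
    using sep i y yz z(2) z0c unfolding separation_def inj_on_def by metis
  then have IH: "map \<theta> [s' - length w..<s'] = w"
    using snoc.IH[of s'] snoc.prems s z(1) by auto
  have "[s - length (w @ [i])..<s] = [s' - length w..<s'] @ [s']"
    using s snoc.prems(2) by auto
  then show ?case using IH \<open>\<theta> s' = i\<close> by simp
qed

lemma comb:
  assumes "finite L" "\<forall>w\<in>L. 1 \<le> c w \<and> c w \<le> N" "(1::nat) \<le> N"
  shows "(\<Sum>w\<in>L. c w) = card L + (\<Sum>k=2..N. (k - 1) * card {w\<in>L. c w = k})"
proof -
  have a: "(\<Sum>w\<in>L. c w) = card L + (\<Sum>w\<in>L. c w - 1)"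
  proof -
    have "(\<Sum>w\<in>L. c w) = (\<Sum>w\<in>L. 1 + (c w - 1))"
      using assms(2) by (intro sum.cong) auto
    then show ?thesis unfolding sum.distrib by simp
  qed
  have b: "(\<Sum>w\<in>L. c w - 1) = (\<Sum>k\<in>{1..N}. \<Sum>w\<in>{w\<in>L. c w = k}. c w - 1)"
    using assms by (intro sum.group[symmetric]) auto
  have c: "(\<Sum>k\<in>{1..N}. \<Sum>w\<in>{w\<in>L. c w = k}. c w - 1) = (\<Sum>k\<in>{1..N}. (k - 1) * card {w\<in>L. c w = k})"
    by (intro sum.cong) auto
  have d: "(\<Sum>k\<in>{1..N}. (k - 1) * card {w\<in>L. c w = k}) = (\<Sum>k=2..N. (k - 1) * card {w\<in>L. c w = k})"
    using assms(3) by (subst sum.atLeast_Suc_atMost) (auto simp: numeral_2_eq_2)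
  show ?thesis using a b c d by simp
qed

lemma Lang_sub: "\<forall>t. \<theta> t \<in> {1..N} \<Longrightarrow> Lang n \<theta> \<subseteq> {xs. set xs \<subseteq> {1..N} \<and> length xs = n}"
  unfolding Lang_def by auto

lemma Lang_fin: "\<forall>t. \<theta> t \<in> {1..N} \<Longrightarrow> finite (Lang n \<theta>)"
  by (rule finite_subset[OF Lang_sub]) (auto intro: finite_lists_length_eq)

theorem lemma4:
  fixes N :: nat and Xs :: "nat \<Rightarrow> 'a::metric_space set" and f :: "'a \<Rightarrow> 'a"
    and fe :: "nat \<Rightarrow> 'a \<Rightarrow> 'a" and x :: 'a and \<theta> :: "nat \<Rightarrow> nat"
  assumes cpt: "compact (UNIV :: 'a set)"
    and N2: "N \<ge> 2"
    and op: "\<forall>i\<in>{1..N}. open (Xs i) \<and> Xs i \<noteq> {}"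
    and disj: "\<forall>i\<in>{1..N}. \<forall>j\<in>{1..N}. i \<noteq> j \<longrightarrow> Xs i \<inter> Xs j = {}"
    and cover: "(\<Union>i\<in>{1..N}. closure (Xs i)) = UNIV"
    and ext: "\<forall>i\<in>{1..N}. continuous_on (closure (Xs i)) (fe i) \<and> (\<forall>y\<in>Xs i. fe i y = f y)"
    and xX: "x \<in> Xtilde N Xs f"
    and itin: "is_itinerary N Xs f x \<theta>"
  shows "(\<forall>n\<ge>1. complexity \<theta> (n + 1)
            \<le> complexity \<theta> n + (\<Sum>k=2..N. (k - 1) * card (Lang_k N Xs f x \<theta> n k)))
       \<and> (separation N Xs fe \<longrightarrow>
          (\<forall>n\<ge>1. complexity \<theta> (n + 1)
            = complexity \<theta> n + (\<Sum>k=2..N. (k - 1) * card (Lang_k N Xs f x \<theta> n k))))"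
proof -
  have rng: "\<forall>t. \<theta> t \<in> {1..N}" using itin unfolding is_itinerary_def by blast
  define K where "K n w = {j \<in> {1..N}. \<exists>t. (f ^^ (t + n)) x \<in> Aword Xs f w \<inter> Xs j}" for n w
  define F where "F n w = {v \<in> Lang (n+1) \<theta>. take n v = w}" for n w
  have finK: "finite (K n w)" for n w unfolding K_def by auto
  have finF: "finite (F n w)" for n w unfolding F_def using Lang_fin[OF rng] by auto
  have cardL': "card (Lang (n+1) \<theta>) = (\<Sum>w\<in>Lang n \<theta>. card (F n w))" for n
  proof -
    have "Lang (n+1) \<theta> = (\<Union>w\<in>Lang n \<theta>. F n w)"
      unfolding F_def Lang_def by (auto simp: take_map)
    then have "card (Lang (n+1) \<theta>) = card (\<Union>w\<in>Lang n \<theta>. F n w)" by simp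
    also have "\<dots> = (\<Sum>w\<in>Lang n \<theta>. card (F n w))"
      by (rule card_UN_disjoint) (auto simp: F_def Lang_fin[OF rng])
    finally show ?thesis .
  qed
  have Fle: "card (F n w) \<le> card (K n w)" and Fge: "w \<in> Lang n \<theta> \<Longrightarrow> 1 \<le> card (F n w)"
    and Feq: "separation N Xs fe \<Longrightarrow> w \<in> Lang n \<theta> \<Longrightarrow> card (F n w) = card (K n w)" for n w
  proof -
    have inj: "inj_on last (F n w)"
    proof (rule inj_onI)
      fix u v assume "u \<in> F n w" "v \<in> F n w" "last u = last v"
      then obtain a b where "u = map \<theta> [a..<a+(n+1)]" "v = map \<theta> [b..<b+(n+1)]" "take n u = w" "take n v = w"
        unfolding F_def Lang_def by auto
      then have "u = take n u @ [last u]" "v = take n v @ [last v]"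
        using tl_last by auto
      then show "u = v" using \<open>last u = last v\<close> \<open>take n u = w\<close> \<open>take n v = w\<close> by metis
    qed
    have sub: "last ` F n w \<subseteq> K n w"
    proof
      fix j assume "j \<in> last ` F n w"
      then obtain t where v: "take n (map \<theta> [t..<t+(n+1)]) = w" "j = last (map \<theta> [t..<t+(n+1)])"
        unfolding F_def Lang_def by auto
      have w: "w = map \<theta> [t..<t+n]" using v(1) by (simp add: take_map)
      have j: "j = \<theta> (t+n)" using v(2) by simp
      show "j \<in> K n w" unfolding K_def using forward[OF itin, of t n] itin_facts[OF itin, of "t+n"] w j
        by auto
    qed
    show "card (F n w) \<le> card (K n w)"
      using card_inj_on_le[OF inj sub finK] .
    show "1 \<le> card (F n w)" if wL0: "w \<in> Lang n \<theta>"
    proof -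
      obtain t where w: "w = map \<theta> [t..<t+n]" using wL0 by (auto simp: Lang_def)
      have "map \<theta> [t..<t+(n+1)] \<in> F n w" unfolding F_def Lang_def w by (auto simp: take_map)
      then show ?thesis using finF by (metis One_nat_def Suc_leI card_gt_0_iff empty_iff)
    qed
    show "card (F n w) = card (K n w)" if sep: "separation N Xs fe" and wL: "w \<in> Lang n \<theta>"
    proof -
      have "K n w \<subseteq> last ` F n w"
      proof
        fix j assume "j \<in> K n w"
        then obtain t where j: "j \<in> {1..N}" "(f ^^ (t + n)) x \<in> Aword Xs f w" "(f ^^ (t + n)) x \<in> Xs j"
          unfolding K_def by auto
        show "j \<in> last ` F n w"
        proof -
          have ws: "set w \<subseteq> {1..N}" "length w = n" using Lang_sub[OF rng] wL by auto
          have "map \<theta> [t + n - length w..<t+n] = w"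
            using backward[OF cpt ext itin sep ws(1), of "t+n"] ws j(2) by simp
          then have w: "map \<theta> [t..<t+n] = w" using ws by simp
          have "\<theta> (t+n) = j" using itin_facts(3)[OF itin j(1) j(3)] .
          then have "map \<theta> [t..<t+(n+1)] \<in> F n w" "last (map \<theta> [t..<t+(n+1)]) = j"
            unfolding F_def Lang_def using w by (auto simp: take_map)
          then show ?thesis by (metis image_eqI)
        qed
      qed
      then have "last ` F n w = K n w" using sub by blast
      then show ?thesis using card_image[OF inj] by simp
    qed
  qed
  have Lk: "Lang_k N Xs f x \<theta> n k = {w \<in> Lang n \<theta>. card (K n w) = k}" for n k
    unfolding Lang_k_def K_def ..
  have cb: "(\<Sum>w\<in>Lang n \<theta>. card (K n w)) = complexity \<theta> n
      + (\<Sum>k=2..N. (k - 1) * card (Lang_k N Xs f x \<theta> n k))" for n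
  proof -
    have "\<forall>w\<in>Lang n \<theta>. 1 \<le> card (K n w) \<and> card (K n w) \<le> N"
    proof
      fix w assume wl: "w \<in> Lang n \<theta>"
      have "card (K n w) \<le> card {1..N}" unfolding K_def by (intro card_mono) auto
      moreover have "1 \<le> card (F n w)" by (rule Fge[OF wl])
      moreover have "card (F n w) \<le> card (K n w)" by (rule Fle)
      ultimately show "1 \<le> card (K n w) \<and> card (K n w) \<le> N" by simp
    qed
    then have "(\<Sum>w\<in>Lang n \<theta>. card (K n w)) = card (Lang n \<theta>)
       + (\<Sum>k=2..N. (k - 1) * card {w\<in>Lang n \<theta>. card (K n w) = k})"
      using N2 by (intro comb Lang_fin[OF rng]) auto
    then show ?thesis unfolding Lk complexity_def .
  qed
  have "complexity \<theta> (n + 1) = (\<Sum>w\<in>Lang n \<theta>. card (F n w))" for n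
    unfolding complexity_def by (rule cardL')
  have P1: "complexity \<theta> (n + 1) \<le> complexity \<theta> n
      + (\<Sum>k=2..N. (k - 1) * card (Lang_k N Xs f x \<theta> n k))" for n
  proof -
    have "(\<Sum>w\<in>Lang n \<theta>. card (F n w)) \<le> (\<Sum>w\<in>Lang n \<theta>. card (K n w))"
      by (rule sum_mono) (rule Fle)
    then show ?thesis using cb[of n] \<open>\<And>n. complexity \<theta> (n + 1) = _\<close> by simp
  qed
  have P2: "complexity \<theta> (n + 1) = complexity \<theta> n
      + (\<Sum>k=2..N. (k - 1) * card (Lang_k N Xs f x \<theta> n k))" if sep: "separation N Xs fe" for n
  proof -
    have "(\<Sum>w\<in>Lang n \<theta>. card (F n w)) = (\<Sum>w\<in>Lang n \<theta>. card (K n w))"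
      by (rule sum.cong) (auto intro: Feq[OF sep])
    then show ?thesis using cb[of n] \<open>\<And>n. complexity \<theta> (n + 1) = _\<close> by simp
  qed
  show ?thesis using P1 P2 by blast
qed

end
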